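(* Let $L_s,L_t\ge 0$ be integers and $M,N$ positive integers with $\gcd(M,N)=1$, and suppose $N<L_t+1$ and $M<L_s+1$. Let $\bm\Omega_s$ be the $(L_t+1)\times(L_s+1)$ matrix with $(l,p)$-th entry $lM+pN$, $0\le l\le L_t$, $0\le p\le L_s$. Then the number of holes of $\bm\Omega_s$, i.e. the number of integers in $[0, L_tM+L_sN]$ that are not equal to any entry of $\bm\Omega_s$, is $(M-1)(N-1)$. *)

theory Defs
  imports Main
begin

definition omega_entries :: "nat \<Rightarrow> nat \<Rightarrow> nat \<Rightarrow> nat \<Rightarrow> nat set" where
  "omega_entries Lt Ls M N = {l * M + p * N | l p. l \<le> Lt \<and> p \<le> Ls}"

definition holes :: "nat \<Rightarrow> nat \<Rightarrow> nat \<Rightarrow> nat \<Rightarrow> nat set" where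
  "holes Lt Ls M N = {0 .. Lt * M + Ls * N} - omega_entries Lt Ls M N"

end

theory Submission
  imports Defs
begin

theorem lemma2:
  fixes Lt Ls M N :: nat
  assumes "M > 0" and "N > 0" and "gcd M N = 1"
    and "N < Lt + 1" and "M < Ls + 1"
  shows "card (holes Lt Ls M N) = (M - 1) * (N - 1)"
proof -
  define f where "f = (\<lambda>(l::nat,p::nat). l*M + p*N)"
  define B where "B = {0..Lt} \<times> {0..Ls}"
  define E where "E = {N..Lt} \<times> {0..Ls-M}"
  define D where "D = B - E"
  have EB: "E \<subseteq> B" using assms unfolding E_def B_def by auto
  have cB: "card B = (Lt+1)*(Ls+1)" unfolding B_def by (simp add: card_cartesian_product)
  have c1: "card {0..Ls-M} = Ls+1-M" using assms by simp
  have c2: "card {N..Lt} = Lt+1-N" by simp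
  have cE: "card E = (Lt+1-N)*(Ls+1-M)" unfolding E_def card_cartesian_product c1 c2 by simp
  have cD: "card D = (Lt+1)*(Ls+1) - (Lt+1-N)*(Ls+1-M)"
    unfolding D_def using card_Diff_subset[OF _ EB] cB cE
    by (metis B_def finite_SigmaI finite_atLeastAtMost finite_subset EB)
  have inj: "inj_on f D"
  proof (rule inj_onI)
    fix x y assume x: "x \<in> D" and y: "y \<in> D" and fxy: "f x = f y"
    obtain l p where xe: "x = (l,p)" by force
    obtain l' p' where ye: "y = (l',p')" by force
    have eq: "l*M + p*N = l'*M + p'*N" using fxy xe ye f_def by simp
    have key: "\<And>a b a' b'. (a,b) \<in> D \<Longrightarrow> (a',b') \<in> D \<Longrightarrow> a*M + b*N = a'*M + b'*N \<Longrightarrow> a < a' \<Longrightarrow> False"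
    proof -
      fix a b a' b' assume d1: "(a,b) \<in> D" and d2: "(a',b') \<in> D"
        and e: "a*M + b*N = a'*M + b'*N" and lt: "a < a'"
      have e2: "(a'-a)*M = (b-b')*N" using e lt
        by (simp add: diff_mult_distrib) 
      have "N dvd (a'-a)*M" using e2 by simp
      then have "N dvd (a'-a)" using assms(3)
      proof -
        have "coprime N M" using assms(3) by (simp add: coprime_iff_gcd_eq_1 gcd.commute)
        then show ?thesis using \<open>N dvd (a'-a)*M\<close> by (simp add: coprime_dvd_mult_left_iff)
      qed
      then have "N \<le> a'-a" using lt by (simp add: dvd_imp_le)
      then have "N*M \<le> (a'-a)*M" by simp
      then have "N*M \<le> (b-b')*N" using e2 by simp
      then have "M * N \<le> (b-b') * N" by (simp only: mult.commute)
      then have "M \<le> b - b'" using assms(2) mult_le_cancel2 by blast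
      then have "b' + M \<le> b" using assms(1) by arith
      moreover have "b \<le> Ls" "a' \<le> Lt" using d1 d2 D_def B_def by auto
      moreover have "N \<le> a'" using \<open>N \<le> a'-a\<close> by simp
      ultimately have "(a',b') \<in> E" unfolding E_def by auto
      then show False using d2 D_def by auto
    qed
    have "l = l'"
    proof (rule ccontr)
      assume "l \<noteq> l'"
      then have "l < l' \<or> l' < l" by arith
      then show False
      proof
        assume "l < l'" then show False using key[of l p l' p'] x y xe ye eq by blast
      next
        assume "l' < l" then show False using key[of l' p' l p] x y xe ye eq by simp
      qed
    qed
    then have "p = p'" using eq assms(2) by simp
    then show "x = y" using xe ye \<open>l = l'\<close> by simp
  qed
  have img: "f ` D = omega_entries Lt Ls M N"
  proof
    show "f ` D \<subseteq> omega_entries Lt Ls M N"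
    proof
      fix n assume "n \<in> f ` D"
      then obtain l p where "(l,p) \<in> D" "n = f (l,p)" by auto
      then have "l \<le> Lt" "p \<le> Ls" "n = l*M + p*N" unfolding D_def B_def f_def by auto
      then show "n \<in> omega_entries Lt Ls M N" unfolding omega_entries_def by blast
    qed
  next
    show "omega_entries Lt Ls M N \<subseteq> f ` D"
    proof
      fix n assume "n \<in> omega_entries Lt Ls M N"
      then obtain l0 p0 where "l0 \<le> Lt" "p0 \<le> Ls" "n = l0*M + p0*N"
        unfolding omega_entries_def by auto
      then have ex: "\<exists>l p. l \<le> Lt \<and> p \<le> Ls \<and> n = l*M + p*N" by blast
      define P where "P = (\<lambda>l. \<exists>p. l \<le> Lt \<and> p \<le> Ls \<and> n = l*M + p*N)"
      define l where "l = (LEAST l. P l)"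
      have "P l" unfolding l_def using ex P_def by (metis LeastI)
      then have lP: "\<exists>p. l \<le> Lt \<and> p \<le> Ls \<and> n = l*M + p*N" unfolding P_def .
      have lmin: "\<And>l'. (\<exists>p. l' \<le> Lt \<and> p \<le> Ls \<and> n = l'*M + p*N) \<Longrightarrow> l \<le> l'"
        unfolding l_def by (rule Least_le) (simp add: P_def)
      obtain p where lp: "l \<le> Lt" "p \<le> Ls" "n = l*M + p*N" using lP by blast
      have "(l,p) \<notin> E"
      proof
        assume "(l,p) \<in> E"
        then have h: "N \<le> l" "p \<le> Ls - M" unfolding E_def by auto
        obtain k where k: "l = N + k" using h(1) le_Suc_ex by blast
        have "n = (l-N)*M + (p+M)*N" using lp k
          by (simp add: algebra_simps)
        moreover have "l - N \<le> Lt" "p + M \<le> Ls" using lp h assms by auto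
        ultimately have "l \<le> l - N" using lmin by blast
        then show False using h assms(2) by simp
      qed
      then have "(l,p) \<in> D" using lp unfolding D_def B_def by auto
      moreover have "n = f (l,p)" using lp f_def by simp
      ultimately show "n \<in> f ` D" by blast
    qed
  qed
  have cS: "card (omega_entries Lt Ls M N) = (Lt+1)*(Ls+1) - (Lt+1-N)*(Ls+1-M)"
    using card_image[OF inj] img cD by simp
  have sub: "omega_entries Lt Ls M N \<subseteq> {0 .. Lt * M + Ls * N}"
    unfolding omega_entries_def by (auto intro!: add_mono mult_right_mono)
  have ch: "card (holes Lt Ls M N) = (Lt*M + Ls*N + 1) - card (omega_entries Lt Ls M N)"
    unfolding holes_def using card_Diff_subset[OF _ sub] finite_subset[OF sub] by simp
  obtain n where n: "N = n + 1" using assms(2) by (metis Suc_eq_plus1 gr0_implies_Suc)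
  obtain m where m: "M = m + 1" using assms(1) by (metis Suc_eq_plus1 gr0_implies_Suc)
  have "n \<le> Lt" using assms(4) n by simp
  then obtain a where a: "Lt = n + a" using le_Suc_ex by blast
  have "m \<le> Ls" using assms(5) m by simp
  then obtain b where b: "Ls = m + b" using le_Suc_ex by blast
  have e1: "Lt+1-N = a" "Ls+1-M = b" using a b m n by simp_all
  have e2: "(Lt+1)*(Ls+1) = (n+1)*(m+1) + a*(m+1) + b*(n+1) + a*b"
    unfolding a b by (simp add: algebra_simps)
  have e3: "Lt*M + Ls*N + 1 = (n+1)*(m+1) + a*(m+1) + b*(n+1) + n*m"
    unfolding a b m n by (simp add: algebra_simps)
  have "card (holes Lt Ls M N) = n*m" unfolding ch cS e1 e2 e3 by simp
  then show ?thesis using m n by simp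
qed
end
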